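(* Suppose $a$ and $b$ are integers with $a\le p-1$ and $b\le q-1$, and $s$ is an element of $S$ (or of $R$) which is homogeneous modulo $\vec c$ of degree $a\vec x+b\vec y \bmod \vec c$ (i.e.\ all its monomials have degree congruent to $a\vec x+b\vec y$ in $L/\mathbb{Z}\vec c$). Then: (i) $s$ lies in the ideal $(x^a,y^{q-1+b})\cap(x^{p-1+a},y^b)$; (ii) if $a\le p-2$ then $s$ also lies in $(x^a,y^{q+b})$; (iii) if $b\le q-2$ then $s$ also lies in $(x^{p+a},y^b)$.
   Context: Let $p,q\ge2$ be integers and $W=x^py+xy^q$. Let $L$ be the abelian group generated by $\vec x,\vec y,\vec c$ modulo $p\vec x+\vec y=\vec x+q\vec y=\vec c$; let $S=\mathbb{C}[x,y]$ be $L$-graded with $\deg x=\vec x$, $\deg y=\vec y$, and $R=S/(W)$. *)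

theory Defs
  imports Complex_Main "HOL-Library.Poly_Mapping" "HOL-Library.Product_Plus"
begin

text \<open>S = C[x,y]: a polynomial is a finitely supported map from exponent pairs (i,j)
  (standing for the monomial x^i y^j) to complex coefficients.\<close>
type_synonym poly2 = "(nat \<times> nat) \<Rightarrow>\<^sub>0 complex"

definition X :: poly2 where "X = Poly_Mapping.single (1, 0) 1"
definition Y :: poly2 where "Y = Poly_Mapping.single (0, 1) 1"

text \<open>Powers with integer exponent; a non-positive exponent gives 1
  (the ideal then being the whole ring).\<close>
definition Xpow :: "int \<Rightarrow> poly2" where "Xpow a = X ^ nat a"
definition Ypow :: "int \<Rightarrow> poly2" where "Ypow b = Y ^ nat b"

definition ideal2 :: "poly2 \<Rightarrow> poly2 \<Rightarrow> poly2 set" where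
  "ideal2 g h = {f * g + k * h | f k. True}"

text \<open>The group L: elements u*x + v*y + w*c are written (u,v,w) in Z^3, modulo the
  subgroup generated by the relations p x + y - c and x + q y - c.
  Congruence in L / Z c: the difference lies in the subgroup generated by
  the relations together with c.\<close>
definition congr_mod_c :: "int \<Rightarrow> int \<Rightarrow> int \<times> int \<times> int \<Rightarrow> int \<times> int \<times> int \<Rightarrow> bool" where
  "congr_mod_c p q d e \<longleftrightarrow>
     (\<exists>m n l :: int. fst d - fst e = m * p + n
                   \<and> fst (snd d) - fst (snd e) = m + n * q
                   \<and> snd (snd d) - snd (snd e) = - m - n + l)"

definition mon_deg :: "nat \<times> nat \<Rightarrow> int \<times> int \<times> int" where
  "mon_deg ij = (int (fst ij), int (snd ij), 0)"

definition homog_mod_c :: "int \<Rightarrow> int \<Rightarrow> poly2 \<Rightarrow> int \<Rightarrow> int \<Rightarrow> bool" where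
  "homog_mod_c p q s a b \<longleftrightarrow>
     (\<forall>mn \<in> Poly_Mapping.keys s. congr_mod_c p q (mon_deg mn) (a, b, 0))"

end

theory Submission
  imports Defs
begin

lemma single00: "Poly_Mapping.single (0::nat, 0::nat) (1::complex) = 1"
  by (metis single_one zero_prod_def)

lemma Xpow_single: "X ^ n = Poly_Mapping.single (n, 0) 1"
  by (induct n) (simp_all add: X_def mult_single single00)

lemma Ypow_single: "Y ^ n = Poly_Mapping.single (0, n) 1"
  by (induct n) (simp_all add: Y_def mult_single single00)

lemma sum_monomials: "(\<Sum>k\<in>Poly_Mapping.keys s. Poly_Mapping.single k (Poly_Mapping.lookup s k)) = (s::poly2)"
proof (rule poly_mapping_eqI)
  fix i
  show "Poly_Mapping.lookup (\<Sum>k\<in>Poly_Mapping.keys s. Poly_Mapping.single k (Poly_Mapping.lookup s k)) i = Poly_Mapping.lookup s i"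
    unfolding lookup_sum
    by (cases "i \<in> Poly_Mapping.keys s")
       (simp_all add: lookup_single when_def sum.delta in_keys_iff)
qed

lemma ideal2_add: "u \<in> ideal2 g h \<Longrightarrow> w \<in> ideal2 g h \<Longrightarrow> u + w \<in> ideal2 g h"
  unfolding ideal2_def
  by clarsimp (metis (no_types, lifting) add.assoc add.left_commute distrib_right)

lemma ideal2_zero: "0 \<in> ideal2 g h"
  unfolding ideal2_def by (rule CollectI, rule exI[of _ 0], rule exI[of _ 0]) simp

lemma ideal2_sum: "finite K \<Longrightarrow> (\<And>k. k \<in> K \<Longrightarrow> f k \<in> ideal2 g h) \<Longrightarrow> sum f K \<in> ideal2 g h"
  by (induct K rule: finite_induct) (simp_all add: ideal2_zero ideal2_add)

lemma mono_ideal: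
  assumes "\<And>i j. (i, j) \<in> Poly_Mapping.keys s \<Longrightarrow> A \<le> i \<or> B \<le> j"
  shows "s \<in> ideal2 (X ^ A) (Y ^ B)"
proof -
  have "Poly_Mapping.single k (Poly_Mapping.lookup s k) \<in> ideal2 (X ^ A) (Y ^ B)" if "k \<in> Poly_Mapping.keys s" for k
  proof -
    obtain i j where k: "k = (i, j)" by force
    show ?thesis
    proof (cases "A \<le> i")
      case True
      have "Poly_Mapping.single k (Poly_Mapping.lookup s k) = Poly_Mapping.single (i - A, j) (Poly_Mapping.lookup s k) * X ^ A + 0 * Y ^ B"
        using True by (simp add: Xpow_single mult_single k)
      then show ?thesis unfolding ideal2_def by blast
    next
      case False
      then have "B \<le> j" using assms that k by blast
      then have "Poly_Mapping.single k (Poly_Mapping.lookup s k) = 0 * X ^ A + Poly_Mapping.single (i, j - B) (Poly_Mapping.lookup s k) * Y ^ B"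
        by (simp add: Ypow_single mult_single k)
      then show ?thesis unfolding ideal2_def by blast
    qed
  qed
  then have "(\<Sum>k\<in>Poly_Mapping.keys s. Poly_Mapping.single k (Poly_Mapping.lookup s k)) \<in> ideal2 (X ^ A) (Y ^ B)"
    by (intro ideal2_sum) auto
  then show ?thesis by (simp add: sum_monomials)
qed

lemma arith_core:
  fixes p q w m :: int
  assumes "p \<ge> 2" "q \<ge> 2" "w = m * (1 - p * q)" "1 \<le> w" "w \<le> p * q - 2"
  shows False
proof (cases "m \<ge> 0")
  case True
  have "p * q \<ge> 2 * 2" using assms(1,2) by (metis mult_mono zero_le_numeral order_trans)
  then have "1 - p * q \<le> 0" by simp
  then have "m * (1 - p * q) \<le> 0" using True by (simp add: mult_nonneg_nonpos)
  then show False using assms by simp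
next
  case False
  have "p * q \<ge> 2 * 2" using assms(1,2) by (metis mult_mono zero_le_numeral order_trans)
  have "(-m) * (p * q - 1) \<ge> 1 * (p * q - 1)"
    by (rule mult_right_mono) (use False \<open>p * q \<ge> 2 * 2\<close> in auto)
  then show False using assms by (simp add: algebra_simps)
qed

lemma qu_bounds:
  fixes q u lo hi :: int
  assumes "q \<ge> 0" "lo \<le> u" "u \<le> hi"
  shows "q * lo \<le> q * u" "q * u \<le> q * hi"
  using assms by (simp_all add: mult_left_mono)

theorem lemma2p2:
  fixes p q a b :: int and s :: poly2
  assumes "p \<ge> 2" and "q \<ge> 2"
    and "a \<le> p - 1" and "b \<le> q - 1"
    and "homog_mod_c p q s a b"
  shows "s \<in> ideal2 (Xpow a) (Ypow (q - 1 + b)) \<inter> ideal2 (Xpow (p - 1 + a)) (Ypow b)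
         \<and> (a \<le> p - 2 \<longrightarrow> s \<in> ideal2 (Xpow a) (Ypow (q + b)))
         \<and> (b \<le> q - 2 \<longrightarrow> s \<in> ideal2 (Xpow (p + a)) (Ypow b))"
proof -
  have key: "\<exists>m n. int i - a = m * p + n \<and> int j - b = m + n * q"
    if "(i, j) \<in> Poly_Mapping.keys s" for i j
    using assms(5) that unfolding homog_mod_c_def congr_mod_c_def mon_deg_def by fastforce
  have r: "s \<in> ideal2 (Xpow A) (Ypow B)"
    if "\<And>i j m n. (i, j) \<in> Poly_Mapping.keys s \<Longrightarrow> int i - a = m * p + n \<Longrightarrow> int j - b = m + n * q
        \<Longrightarrow> int i < A \<Longrightarrow> int j < B \<Longrightarrow> False" for A B
    unfolding Xpow_def Ypow_def
    by (rule mono_ideal) (use key that in fastforce)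
  have e1: "int j - b - q * (int i - a) = m * (1 - p * q)"
    if "int i - a = m * p + n" "int j - b = m + n * q" for i j m n
    using that by (simp add: algebra_simps)
  have e2: "int i - a - p * (int j - b) = n * (1 - p * q)"
    if "int i - a = m * p + n" "int j - b = m + n * q" for i j m n
    using that by (simp add: algebra_simps)
  have q0: "q \<ge> 0" "p \<ge> 0" using assms by auto
  have A: "s \<in> ideal2 (Xpow a) (Ypow (q - 1 + b))"
  proof (rule r)
    fix i j m n assume h: "int i - a = m * p + n" "int j - b = m + n * q" "int i < a" "int j < q - 1 + b"
    have "q * (1 - p) \<le> q * (int i - a)" "q * (int i - a) \<le> q * (-1)"
      using qu_bounds[OF q0(1), of "1 - p" "int i - a" "-1"] h assms by auto
    then show False using arith_core[OF assms(1,2) e1[OF h(1,2)]] h assms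
      by (simp add: algebra_simps)
  qed
  have B: "s \<in> ideal2 (Xpow (p - 1 + a)) (Ypow b)"
  proof (rule r)
    fix i j m n assume h: "int i - a = m * p + n" "int j - b = m + n * q" "int i < p - 1 + a" "int j < b"
    have "p * (1 - q) \<le> p * (int j - b)" "p * (int j - b) \<le> p * (-1)"
      using qu_bounds[OF q0(2), of "1 - q" "int j - b" "-1"] h assms by auto
    then show False using arith_core[OF assms(1,2) e2[OF h(1,2)]] h assms
      by (simp add: algebra_simps)
  qed
  have C: "s \<in> ideal2 (Xpow a) (Ypow (q + b))" if "a \<le> p - 2"
  proof (rule r)
    fix i j m n assume h: "int i - a = m * p + n" "int j - b = m + n * q" "int i < a" "int j < q + b"
    have "q * (2 - p) \<le> q * (int i - a)" "q * (int i - a) \<le> q * (-1)"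
      using qu_bounds[OF q0(1), of "2 - p" "int i - a" "-1"] h assms that by auto
    then show False using arith_core[OF assms(1,2) e1[OF h(1,2)]] h assms
      by (simp add: algebra_simps)
  qed
  have D: "s \<in> ideal2 (Xpow (p + a)) (Ypow b)" if "b \<le> q - 2"
  proof (rule r)
    fix i j m n assume h: "int i - a = m * p + n" "int j - b = m + n * q" "int i < p + a" "int j < b"
    have "p * (2 - q) \<le> p * (int j - b)" "p * (int j - b) \<le> p * (-1)"
      using qu_bounds[OF q0(2), of "2 - q" "int j - b" "-1"] h assms that by auto
    then show False using arith_core[OF assms(1,2) e2[OF h(1,2)]] h assms
      by (simp add: algebra_simps)
  qed
  show ?thesis using A B C D by blast
qed

end
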